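(* Let $x,y\in\Gamma_2$ with $y\in\mathcal C(x)$, $y\ne e$, and suppose $\mathcal R_y=\emptyset$, so that $y$ is represented by a unique geodesic word $w_1w_2\cdots w_n$. Let $a\in A\cap\mathcal C(x)$. Then $xy\in\mathcal C(e,xa)$ if and only if $w_1=a$.
   Context: $\Gamma_2=\langle a,b,c,d\mid aba^{-1}b^{-1}cdc^{-1}d^{-1}\rangle$ with symmetric generating set $A=\{a^{\pm1},b^{\pm1},c^{\pm1},d^{\pm1}\}$, word metric $d$ and word length $|\cdot|$ (here $a$ in the statement denotes an arbitrary element of $A$). The cone type of $x$ is $\mathcal C(x)=\{z:\ |xz|=|x|+|z|\}$. For vertices $x,y$, the cone $\mathcal C(x,y)=\{z\in\Gamma_2: d(x,z)=d(x,y)+d(y,z)\}$. A word belongs to $\mathcal R$ if it is a nonempty subword of length at most $4$ of a cyclic permutation of the relator $aba^{-1}b^{-1}cdc^{-1}d^{-1}$ or of its inverse. For $y\in\Gamma_2$, $\mathcal R_y$ is the set of all length-4 subwords $w_iw_{i+1}w_{i+2}w_{i+3}$ belonging to $\mathcal R$, taken over all geodesic words $w_1\cdots w_n$ representing $y$. *)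

theory Defs
  imports Main
begin

text \<open>Elements are represented by words over the symmetric generating set A;
  two words represent the same group element iff they are related by
  the congruence generated by free reduction and by the relator.
  The identity e is represented by the empty word.\<close>

datatype gen = Ga | Gb | Gc | Gd

type_synonym letter = "gen \<times> bool"   \<comment> \<open>(g, True) = g, (g, False) = g^-1\<close>
type_synonym word = "letter list"

definition inv_letter :: "letter \<Rightarrow> letter" where
  "inv_letter l = (fst l, \<not> snd l)"

definition inv_word :: "word \<Rightarrow> word" where
  "inv_word w = rev (map inv_letter w)"

definition relator :: word where
  "relator = [(Ga,True),(Gb,True),(Ga,False),(Gb,False),
              (Gc,True),(Gd,True),(Gc,False),(Gd,False)]"

inductive elem_step :: "word \<Rightarrow> word \<Rightarrow> bool" where
  cancel: "elem_step (u @ [l, inv_letter l] @ v) (u @ v)"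
| rel: "elem_step (u @ relator @ v) (u @ v)"

definition geq :: "word \<Rightarrow> word \<Rightarrow> bool" where
  "geq = (\<lambda>u v. elem_step u v \<or> elem_step v u)\<^sup>*\<^sup>*"

definition wlen :: "word \<Rightarrow> nat" where
  "wlen w = (LEAST n. \<exists>v. geq v w \<and> length v = n)"

definition wdist :: "word \<Rightarrow> word \<Rightarrow> nat" where
  "wdist u v = wlen (inv_word u @ v)"

definition geodesic :: "word \<Rightarrow> bool" where
  "geodesic w \<longleftrightarrow> length w = wlen w"

definition gens :: "word set" where
  "gens = {[l] | l. True}"

definition cone_type :: "word \<Rightarrow> word set" where
  "cone_type x = {z. wlen (x @ z) = wlen x + wlen z}"

definition cone :: "word \<Rightarrow> word \<Rightarrow> word set" where
  "cone x y = {z. wdist x z = wdist x y + wdist y z}"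

definition Rwords :: "word set" where
  "Rwords = {s. s \<noteq> [] \<and> length s \<le> 4 \<and>
     (\<exists>k p q. rotate k relator = p @ s @ q \<or> rotate k (inv_word relator) = p @ s @ q)}"

definition Rset :: "word \<Rightarrow> word set" where
  "Rset y = {s. length s = 4 \<and> s \<in> Rwords \<and>
     (\<exists>v p q. geq v y \<and> geodesic v \<and> v = p @ s @ q)}"

end

theory Submission
  imports Defs
begin


abbreviation "la \<equiv> (Ga,True)"  abbreviation "lA \<equiv> (Ga,False)"
abbreviation "lb \<equiv> (Gb,True)"  abbreviation "lB \<equiv> (Gb,False)"
abbreviation "lc \<equiv> (Gc,True)"  abbreviation "lC \<equiv> (Gc,False)"
abbreviation "ld \<equiv> (Gd,True)"  abbreviation "lD \<equiv> (Gd,False)"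

definition rules :: "(word \<times> word) list" where
"rules = [([la,lA],[]),([lA,la],[]),([lc,lC],[]),([lC,lc],[]),([lb,lB],[]),([lB,lb],[]),([ld,lD],[]),([lD,ld],[]),
 ([lb,la,lB,lA],[lc,ld,lC,lD]), ([lb,lA,lB,lc],[lA,ld,lc,lD]), ([lB,lA,ld,lc],[lA,lB,lc,ld]),
 ([lB,lc,ld,lC],[la,lB,lA,ld]), ([ld,lc,lD,lC],[la,lb,lA,lB]), ([ld,lC,lD,la],[lC,lb,la,lB]),
 ([lD,la,lb,lA],[lc,lD,lC,lb]), ([lD,lC,lb,la],[lC,lD,la,lb])]"

fun rw_prefix :: "(word\<times>word) list \<Rightarrow> word \<Rightarrow> word option" where
 "rw_prefix [] w = None"
| "rw_prefix ((l,r)#rs) w = (if take (length l) w = l then Some (r @ drop (length l) w) else rw_prefix rs w)"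

fun rw1 :: "word \<Rightarrow> word option" where
 "rw1 [] = None"
| "rw1 (c#w) = (case rw_prefix rules (c#w) of Some w' \<Rightarrow> Some w' | None \<Rightarrow> map_option ((#) c) (rw1 w))"

fun nfk :: "nat \<Rightarrow> word \<Rightarrow> word" where
 "nfk 0 w = w" | "nfk (Suc k) w = (case rw1 w of None \<Rightarrow> w | Some w' \<Rightarrow> nfk k w')"


definition cpcheck :: bool where
"cpcheck = list_all (\<lambda>(l1,r1). list_all (\<lambda>(l2,r2). list_all (\<lambda>k.
  (take (length l1 - k) l2 = drop k l1 \<longrightarrow> nfk 20 (r1 @ drop (length l1 - k) l2) = nfk 20 (take k l1 @ r2)) \<and>
  (length l2 \<le> length l1 - k \<and> take (length l2) (drop k l1) = l2 \<longrightarrow> nfk 20 r1 = nfk 20 (take k l1 @ r2 @ drop (k + length l2) l1))) [0..<length l1]) rules) rules"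

lemma cpcheck_true: cpcheck by code_simp

fun rank :: "letter \<Rightarrow> nat" where
 "rank (Ga,True) = 0" | "rank (Ga,False) = 1" | "rank (Gc,True) = 2" | "rank (Gc,False) = 3"
| "rank (Gb,True) = 4" | "rank (Gb,False) = 5" | "rank (Gd,True) = 6" | "rank (Gd,False) = 7"

fun enc :: "word \<Rightarrow> nat" where
 "enc [] = 0" | "enc (x#w) = rank x * 8 ^ length w + enc w"

fun rule_ok :: "word \<times> word \<Rightarrow> bool" where
 "rule_ok (l,r) = ((r = [] \<and> length l = 2 \<and> l!1 = inv_letter (l!0)) \<or>
   (length l = 4 \<and> length r = 4 \<and>
    list_ex (\<lambda>k. l @ inv_word r = rotate k relator \<or> l @ inv_word r = rotate k (inv_word relator)) [0..<8] \<and>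
    list_ex (\<lambda>k. take 4 (rotate k relator) = l \<or> take 4 (rotate k (inv_word relator)) = l) [0..<8] \<and>
    enc r < enc l))"

lemma rules_ok_true: "list_all rule_ok rules" by code_simp

lemma rule_ok: "(l,r) \<in> set rules \<Longrightarrow> rule_ok (l,r)"
  using rules_ok_true by (metis list_all_iff)

lemma relator_nf: "nfk 20 relator = []" by code_simp



inductive rstep :: "word \<Rightarrow> word \<Rightarrow> bool" where
  rs: "(l,r) \<in> set rules \<Longrightarrow> rstep (p@l@q) (p@r@q)"

lemma rstep_ctx: "rstep u v \<Longrightarrow> rstep (p@u@q) (p@v@q)"
proof (induction rule: rstep.induct)
  case (rs l r p' q')
  have "rstep ((p@p')@l@(q'@q)) ((p@p')@r@(q'@q))" using rs by (rule rstep.rs)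
  then show ?case by simp
qed

lemma rsteps_ctx: "rstep\<^sup>*\<^sup>* u v \<Longrightarrow> rstep\<^sup>*\<^sup>* (p@u@q) (p@v@q)"
proof (induction rule: rtranclp_induct)
  case base then show ?case by simp
next
  case (step y z) then show ?case using rstep_ctx by (metis rtranclp.rtrancl_into_rtrancl)
qed

lemma rw_prefix_sound: "rw_prefix rs w = Some w' \<Longrightarrow> \<exists>(l,r)\<in>set rs. w = l @ drop (length l) w \<and> w' = r @ drop (length l) w"
proof (induction rs)
  case Nil then show ?case by simp
next
  case (Cons a rs)
  obtain l r where a: "a = (l,r)" by fastforce
  show ?case
  proof (cases "take (length l) w = l")
    case True
    then have "w = l @ drop (length l) w" by (metis append_take_drop_id)
    with True Cons.prems a show ?thesis by auto
  next
    case False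
    with Cons a show ?thesis by auto
  qed
qed

lemma rw1_sound: "rw1 w = Some w' \<Longrightarrow> rstep w w'"
proof (induction w arbitrary: w')
  case Nil then show ?case by simp
next
  case (Cons c w)
  show ?case
  proof (cases "rw_prefix rules (c#w)")
    case (Some u)
    then obtain l r where lr: "(l,r) \<in> set rules" "c#w = l @ drop (length l) (c#w)" "u = r @ drop (length l) (c#w)"
      using rw_prefix_sound by fastforce
    have "rstep ([]@l@drop (length l) (c#w)) ([]@r@drop (length l) (c#w))" using lr(1) by (rule rstep.rs)
    then show ?thesis using Cons.prems Some lr by simp
  next
    case None
    with Cons.prems obtain u where u: "rw1 w = Some u" "w' = c#u" by auto
    have "rstep ([c]@w@[]) ([c]@u@[])" using Cons.IH[OF u(1)] by (rule rstep_ctx)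
    then show ?thesis using u by simp
  qed
qed

lemma nfk_sound: "rstep\<^sup>*\<^sup>* w (nfk k w)"
proof (induction k arbitrary: w)
  case 0 then show ?case by simp
next
  case (Suc k)
  show ?case
  proof (cases "rw1 w")
    case None then show ?thesis by simp
  next
    case (Some u)
    then have "rstep w u" by (rule rw1_sound)
    then show ?thesis using Some Suc[of u] by (simp add: converse_rtranclp_into_rtranclp)
  qed
qed

definition joinable :: "word \<Rightarrow> word \<Rightarrow> bool" where
  "joinable u v \<longleftrightarrow> (\<exists>z. rstep\<^sup>*\<^sup>* u z \<and> rstep\<^sup>*\<^sup>* v z)"

lemma joinable_nf: "nfk 20 u = nfk 20 v \<Longrightarrow> joinable u v"
  unfolding joinable_def using nfk_sound by metis

lemma joinable_ctx: "joinable u v \<Longrightarrow> joinable (p@u@q) (p@v@q)"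
  unfolding joinable_def using rsteps_ctx by metis

lemma cp1: "(l1,r1) \<in> set rules \<Longrightarrow> (l2,r2) \<in> set rules \<Longrightarrow> k < length l1 \<Longrightarrow>
  take (length l1 - k) l2 = drop k l1 \<Longrightarrow> joinable (r1 @ drop (length l1 - k) l2) (take k l1 @ r2)"
  using cpcheck_true unfolding cpcheck_def list_all_iff
  by (intro joinable_nf) fastforce

lemma cp2: "(l1,r1) \<in> set rules \<Longrightarrow> (l2,r2) \<in> set rules \<Longrightarrow> k < length l1 \<Longrightarrow>
  length l2 \<le> length l1 - k \<Longrightarrow> take (length l2) (drop k l1) = l2 \<Longrightarrow>
   joinable r1 (take k l1 @ r2 @ drop (k + length l2) l1)"
  using cpcheck_true unfolding cpcheck_def list_all_iff
  by (intro joinable_nf) fastforce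


lemma L1: "(p1::'a list)@l1@q1 = p2@l2@q2 \<Longrightarrow> length p1 + length l1 \<le> length p2 \<Longrightarrow> p2 = p1 @ l1 @ drop (length p1 + length l1) p2"
  by (metis (no_types, lifting) append.assoc append_eq_append_conv_if append_take_drop_id length_append)
lemma L2: "(p1::'a list)@l1@q1 = p2@l2@q2 \<Longrightarrow> length p1 \<le> length p2 \<Longrightarrow> length p2 < length p1 + length l1 \<Longrightarrow> p2 = p1 @ take (length p2 - length p1) l1 \<and> drop (length p2 - length p1) l1 @ q1 = l2 @ q2"
  by (metis (no_types, lifting) ext append_assoc append_eq_append_conv_if
    drop_append drop_eq_Nil2 length_append take_all_iff take_append
    verit_comp_simplify1(3))
lemma L3: "(d::'a list) @ q1 = l2 @ q2 \<Longrightarrow> length d \<le> length l2 \<Longrightarrow> take (length d) l2 = d \<and> q1 = drop (length d) l2 @ q2"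
  by (simp add: append_eq_append_conv_if)
lemma L4: "(d::'a list) @ q1 = l2 @ q2 \<Longrightarrow> length l2 \<le> length d \<Longrightarrow> take (length l2) d = l2 \<and> q2 = drop (length l2) d @ q1"
  by (metis append_eq_append_conv_if)

lemma peak_ord:
  assumes w: "p1@l1@q1 = p2@l2@q2" and R1: "(l1,r1) \<in> set rules" and R2: "(l2,r2) \<in> set rules"
    and le: "length p1 \<le> length p2"
  shows "joinable (p1@r1@q1) (p2@r2@q2)"
proof (cases "length p1 + length l1 \<le> length p2")
  case True
  define m where "m = drop (length p1 + length l1) p2"
  have p2: "p2 = p1 @ l1 @ m" using L1[OF w True] m_def by simp
  have q1: "q1 = m @ l2 @ q2" using w p2 by simp
  have "rstep (p1@r1@q1) ((p1@r1@m)@r2@q2)" using rstep.rs[OF R2, of "p1@r1@m" q2] q1 by simp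
  moreover have "rstep (p2@r2@q2) (p1@r1@(m@r2@q2))" using rstep.rs[OF R1, of p1 "m@r2@q2"] p2 by simp
  ultimately have "rstep (p1@r1@q1) (p1@r1@m@r2@q2)" "rstep (p2@r2@q2) (p1@r1@m@r2@q2)" by simp_all
  then show ?thesis unfolding joinable_def by (meson r_into_rtranclp)
next
  case False
  define k where "k = length p2 - length p1"
  have k: "k < length l1" using False le k_def by simp
  have p2: "p2 = p1 @ take k l1" and rest: "drop k l1 @ q1 = l2 @ q2"
    using L2[OF w le] False k_def by auto
  show ?thesis
  proof (cases "length l1 - k \<le> length l2")
    case True
    have t: "take (length l1 - k) l2 = drop k l1" and q1: "q1 = drop (length l1 - k) l2 @ q2"
      using L3[OF rest] True by auto
    have "joinable (p1@(r1 @ drop (length l1 - k) l2)@q2) (p1@(take k l1 @ r2)@q2)"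
      using cp1[OF R1 R2 k t] by (rule joinable_ctx)
    then show ?thesis using q1 p2 by simp
  next
    case False
    have t: "take (length l2) (drop k l1) = l2" and q2: "q2 = drop (length l2) (drop k l1) @ q1"
      using L4[OF rest] False by auto
    have "joinable (p1@r1@q1) (p1@(take k l1 @ r2 @ drop (k + length l2) l1)@q1)"
      using joinable_ctx[OF cp2[OF R1 R2 k _ t], of p1 q1] False by simp
    then show ?thesis using q2 p2 by (simp add: add.commute)
  qed
qed

lemma joinable_sym: "joinable u v \<Longrightarrow> joinable v u" unfolding joinable_def by blast

lemma local_conf: "rstep w w1 \<Longrightarrow> rstep w w2 \<Longrightarrow> joinable w1 w2"
proof -
  assume A: "rstep w w1" and B: "rstep w w2"
  from A obtain p1 l1 r1 q1 where
    a: "w = p1@l1@q1" "w1 = p1@r1@q1" "(l1,r1)\<in>set rules" by (cases rule: rstep.cases) auto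
  from B obtain p2 l2 r2 q2 where
    b: "w = p2@l2@q2" "w2 = p2@r2@q2" "(l2,r2)\<in>set rules" by (cases rule: rstep.cases) auto
  show ?thesis
  proof (cases "length p1 \<le> length p2")
    case True then show ?thesis using peak_ord[of p1 l1 q1 p2 l2 q2 r1 r2] a b by simp
  next
    case False then show ?thesis using peak_ord[of p2 l2 q2 p1 l1 q1 r2 r1] a b joinable_sym by simp
  qed
qed


lemma enc_append: "enc (u@v) = enc u * 8 ^ length v + enc v"
  by (induction u) (simp_all add: algebra_simps power_add)

lemma rule_decr: "(l,r) \<in> set rules \<Longrightarrow> length r < length l \<or> (length r = length l \<and> enc r < enc l)"
  using rule_ok[of l r] by auto

lemma rstep_decr: "rstep u v \<Longrightarrow> length v < length u \<or> (length v = length u \<and> enc v < enc u)"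
proof (induction rule: rstep.induct)
  case (rs l r p q)
  from rule_decr[OF rs] show ?case
  proof
    assume "length r < length l" then show ?thesis by simp
  next
    assume a: "length r = length l \<and> enc r < enc l"
    have "enc r * 8 ^ length q < enc l * 8 ^ length q" using a by simp
    then have "enc (r@q) < enc (l@q)" by (simp add: enc_append)
    then show ?thesis using a by (simp add: enc_append)
  qed
qed

lemma wf_rstep: "wf {(v,u). rstep u v}"
proof (rule wf_subset)
  show "wf (inv_image (less_than <*lex*> less_than) (\<lambda>w. (length w, enc w)))" by (intro wf_inv_image wf_lex_prod wf_less_than)
  show "{(v,u). rstep u v} \<subseteq> inv_image (less_than <*lex*> less_than) (\<lambda>w. (length w, enc w))"
    using rstep_decr by auto
qed

lemma confluent: "rstep\<^sup>*\<^sup>* a b \<Longrightarrow> rstep\<^sup>*\<^sup>* a c \<Longrightarrow> joinable b c"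
proof (induction a arbitrary: b c rule: wf_induct[OF wf_rstep])
  case (1 x b c)
  have IH: "\<And>y b c. rstep x y \<Longrightarrow> rstep\<^sup>*\<^sup>* y b \<Longrightarrow> rstep\<^sup>*\<^sup>* y c \<Longrightarrow> joinable b c"
    using 1(1) by blast
  from 1(2) show ?case
  proof (rule converse_rtranclpE)
    assume "x = b" with 1(3) show ?thesis unfolding joinable_def by blast
  next
    fix y assume xy: "rstep x y" and yb: "rstep\<^sup>*\<^sup>* y b"
    from 1(3) show ?thesis
    proof (rule converse_rtranclpE)
      assume "x = c" with 1(2) show ?thesis unfolding joinable_def by blast
    next
      fix y' assume xy': "rstep x y'" and y'c: "rstep\<^sup>*\<^sup>* y' c"
      obtain u where yu: "rstep\<^sup>*\<^sup>* y u" and y'u: "rstep\<^sup>*\<^sup>* y' u"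
        using local_conf[OF xy xy'] unfolding joinable_def by blast
      obtain v where bv: "rstep\<^sup>*\<^sup>* b v" and uv: "rstep\<^sup>*\<^sup>* u v"
        using IH[OF xy yb yu] unfolding joinable_def by blast
      have y'v: "rstep\<^sup>*\<^sup>* y' v" using y'u uv by (rule rtranclp_trans)
      obtain z where vz: "rstep\<^sup>*\<^sup>* v z" and cz: "rstep\<^sup>*\<^sup>* c z"
        using IH[OF xy' y'v y'c] unfolding joinable_def by blast
      show ?thesis unfolding joinable_def using bv vz cz by (meson rtranclp_trans)
    qed
  qed
qed

definition conv :: "word \<Rightarrow> word \<Rightarrow> bool" where
  "conv = (\<lambda>u v. rstep u v \<or> rstep v u)\<^sup>*\<^sup>*"

lemma conv_joinable: "conv u v \<Longrightarrow> joinable u v"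
  unfolding conv_def
proof (induction rule: rtranclp_induct)
  case base then show ?case unfolding joinable_def by blast
next
  case (step v v')
  then obtain d where ud: "rstep\<^sup>*\<^sup>* u d" and vd: "rstep\<^sup>*\<^sup>* v d" unfolding joinable_def by blast
  from step(2) show ?case
  proof
    assume "rstep v v'"
    then obtain e where "rstep\<^sup>*\<^sup>* d e" "rstep\<^sup>*\<^sup>* v' e"
      using confluent[OF vd, of v'] unfolding joinable_def by blast
    then show ?thesis using ud unfolding joinable_def by (meson rtranclp_trans)
  next
    assume "rstep v' v"
    then have "rstep\<^sup>*\<^sup>* v' d" using vd by (rule converse_rtranclp_into_rtranclp)
    then show ?thesis using ud unfolding joinable_def by blast
  qed
qed

definition irr :: "word \<Rightarrow> bool" where "irr w \<longleftrightarrow> (\<nexists>v. rstep w v)"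

lemma irr_steps: "rstep\<^sup>*\<^sup>* w d \<Longrightarrow> irr w \<Longrightarrow> d = w"
  unfolding irr_def by (erule converse_rtranclpE) auto

lemma conv_irr_eq: "conv u v \<Longrightarrow> irr u \<Longrightarrow> irr v \<Longrightarrow> u = v"
  using conv_joinable irr_steps unfolding joinable_def by metis

lemma rsteps_conv: "rstep\<^sup>*\<^sup>* u v \<Longrightarrow> conv u v \<and> conv v u"
  unfolding conv_def
proof (induction rule: rtranclp_induct)
  case base then show ?case by simp
next
  case (step y z)
  then show ?case
    by (metis (mono_tags, lifting) converse_rtranclp_into_rtranclp rtranclp.rtrancl_into_rtrancl)
qed

lemma conv_trans: "conv u v \<Longrightarrow> conv v w \<Longrightarrow> conv u w"
  unfolding conv_def by (rule rtranclp_trans)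

lemma cancel_rule: "([x, inv_letter x], []) \<in> set rules"
proof -
  obtain g b where x: "x = (g,b)" by fastforce
  show ?thesis unfolding x inv_letter_def rules_def by (cases g; cases b) auto
qed

lemma elem_conv: "elem_step u v \<Longrightarrow> conv u v \<and> conv v u"
proof (induction rule: elem_step.induct)
  case (cancel u l v)
  have "rstep (u @ [l, inv_letter l] @ v) (u @ [] @ v)" using cancel_rule by (rule rstep.rs)
  then show ?case using rsteps_conv by (metis append_Nil r_into_rtranclp)
next
  case (rel u v)
  have "rstep\<^sup>*\<^sup>* relator []" using nfk_sound[of relator 20] relator_nf by simp
  then have "rstep\<^sup>*\<^sup>* (u@relator@v) (u@[]@v)" by (rule rsteps_ctx)
  then show ?case using rsteps_conv by simp
qed

lemma geq_conv: "geq u v \<Longrightarrow> conv u v"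
  unfolding geq_def
proof (induction rule: rtranclp_induct)
  case base then show ?case unfolding conv_def by simp
next
  case (step y z)
  then have "conv y z" using elem_conv by blast
  then show ?case using step conv_trans by blast
qed

lemma geq_irr_eq: "geq u v \<Longrightarrow> irr u \<Longrightarrow> irr v \<Longrightarrow> u = v"
  using geq_conv conv_irr_eq by blast


lemma geq_refl: "geq u u" unfolding geq_def by simp
lemma geq_trans: "geq u v \<Longrightarrow> geq v w \<Longrightarrow> geq u w" unfolding geq_def by (rule rtranclp_trans)
lemma geq_sym: "geq u v \<Longrightarrow> geq v u"
  unfolding geq_def
proof (induction rule: rtranclp_induct)
  case base then show ?case by simp
next
  case (step y z)
  then show ?case by (metis (mono_tags, lifting) converse_rtranclp_into_rtranclp)
qed

lemma elem_ctx: "elem_step u v \<Longrightarrow> elem_step (p@u@q) (p@v@q)"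
proof (induction rule: elem_step.induct)
  case (cancel u l v)
  have "elem_step ((p@u) @ [l, inv_letter l] @ (v@q)) ((p@u) @ (v@q))" by (rule elem_step.cancel)
  then show ?case by simp
next
  case (rel u v)
  have "elem_step ((p@u) @ relator @ (v@q)) ((p@u) @ (v@q))" by (rule elem_step.rel)
  then show ?case by simp
qed

lemma geq_ctx: "geq u v \<Longrightarrow> geq (p@u@q) (p@v@q)"
  unfolding geq_def
proof (induction rule: rtranclp_induct)
  case base then show ?case by simp
next
  case (step y z)
  then have "elem_step (p@y@q) (p@z@q) \<or> elem_step (p@z@q) (p@y@q)" using elem_ctx by blast
  then show ?case using step(3) by (metis (mono_tags, lifting) rtranclp.rtrancl_into_rtrancl)
qed

lemma geq_cancel: "geq (p @ [l, inv_letter l] @ q) (p @ q)"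
  unfolding geq_def using elem_step.cancel by blast

lemma inv_inv_letter: "inv_letter (inv_letter l) = l" by (simp add: inv_letter_def)

lemma geq_inv_r: "geq (y @ inv_word y) []"
proof (induction y)
  case Nil then show ?case by (simp add: inv_word_def geq_refl)
next
  case (Cons c y)
  have "c # y @ inv_word (c#y) = [c] @ (y @ inv_word y) @ [inv_letter c]" by (simp add: inv_word_def)
  moreover have "geq ([c] @ (y @ inv_word y) @ [inv_letter c]) ([c] @ [] @ [inv_letter c])"
    using Cons by (rule geq_ctx)
  moreover have "geq ([] @ [c, inv_letter c] @ []) ([] @ [])" by (rule geq_cancel)
  ultimately show ?case by (metis append_Cons append_Nil geq_trans)
qed

lemma inv_word_inv: "inv_word (inv_word y) = y"
  by (simp add: inv_word_def rev_map comp_def inv_inv_letter)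

lemma geq_inv_l: "geq (inv_word y @ y) []"
  using geq_inv_r[of "inv_word y"] by (simp add: inv_word_inv)

lemma geq_rot: "geq (x@y) [] \<Longrightarrow> geq (y@x) []"
proof -
  assume h: "geq (x@y) []"
  have "geq (y@x@[]) (y@x@(y @ inv_word y))" using geq_ctx[OF geq_sym[OF geq_inv_r[of y]], of "y@x" "[]"] by simp
  moreover have "geq (y@(x@y)@inv_word y) (y@[]@inv_word y)" using h by (rule geq_ctx)
  ultimately show ?thesis using geq_inv_r[of y] by (metis append_assoc append_Nil self_append_conv geq_trans)
qed

lemma geq_relator: "geq relator []"
  unfolding geq_def using elem_step.rel[of "[]" "[]"] by auto

lemma geq_inv_relator: "geq (inv_word relator) []"
proof -
  have "geq (inv_word relator @ []) (inv_word relator @ relator @ [])"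
    using geq_ctx[OF geq_sym[OF geq_relator], of "inv_word relator" "[]"] by simp
  then show ?thesis using geq_inv_l[of relator] by (simp add: geq_trans)
qed

lemma geq_rotate: "geq xs [] \<Longrightarrow> geq (rotate k xs) []"
  by (simp add: rotate_drop_take geq_rot)

lemma geq_from_triv: "geq (l @ inv_word r) [] \<Longrightarrow> geq l r"
proof -
  assume h: "geq (l @ inv_word r) []"
  have "geq (l@[]@[]) (l@(inv_word r @ r)@[])" using geq_ctx[OF geq_sym[OF geq_inv_l[of r]]] by blast
  moreover have "geq ([]@(l@inv_word r)@r) ([]@[]@r)" using h by (rule geq_ctx)
  ultimately show ?thesis by (simp add: geq_trans)
qed

lemma rule_valid: "(l,r) \<in> set rules \<Longrightarrow> geq l r"
proof -
  assume R: "(l,r) \<in> set rules"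
  from rule_ok[OF R] show ?thesis
  proof (elim rule_ok.elims disjE conjE)
    fix l' r' assume e: "(l, r) = (l', r')" and r': "r' = []" and len: "length l' = 2"
      and i: "l' ! 1 = inv_letter (l' ! 0)"
    obtain x y where "l' = [x,y]" using len
      by (cases l'; cases "tl l'"; auto simp: length_Suc_conv numeral_2_eq_2)
    then have "l' = [l'!0, l'!1]" by simp
    then have "l' = [] @ [l'!0, inv_letter (l'!0)] @ []" using i by simp
    then have "geq l' []" using geq_cancel[of "[]" "l'!0" "[]"] by simp
    then show ?thesis using e r' by simp
  next
    fix l' r' assume e: "(l, r) = (l', r')" and
      ex: "list_ex (\<lambda>k. l' @ inv_word r' = rotate k relator \<or> l' @ inv_word r' = rotate k (inv_word relator)) [0..<8]"
    then obtain k where "l' @ inv_word r' = rotate k relator \<or> l' @ inv_word r' = rotate k (inv_word relator)"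
      by (auto simp: list_ex_iff)
    then have "geq (l' @ inv_word r') []" using geq_rotate geq_relator geq_inv_relator by auto
    then show ?thesis using e geq_from_triv by simp
  qed
qed

lemma rule_R4: "(l,r) \<in> set rules \<Longrightarrow> length r < length l \<or> (length l = 4 \<and> l \<in> Rwords)"
proof -
  assume R: "(l,r) \<in> set rules"
  from rule_ok[OF R] show ?thesis
  proof (elim rule_ok.elims disjE conjE)
    fix l' r' assume "(l, r) = (l', r')" "r' = []" "length l' = 2"
    then show ?thesis by simp
  next
    fix l' r' assume e: "(l, r) = (l', r')" and len: "length l' = 4" and
      ex: "list_ex (\<lambda>k. take 4 (rotate k relator) = l' \<or> take 4 (rotate k (inv_word relator)) = l') [0..<8]"
    then obtain k where k: "take 4 (rotate k relator) = l' \<or> take 4 (rotate k (inv_word relator)) = l'"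
      by (auto simp: list_ex_iff)
    then have "rotate k relator = [] @ l' @ drop 4 (rotate k relator) \<or>
       rotate k (inv_word relator) = [] @ l' @ drop 4 (rotate k (inv_word relator))"
      by (metis append_Nil append_take_drop_id)
    then have "\<exists>k p q. rotate k relator = p @ l' @ q \<or> rotate k (inv_word relator) = p @ l' @ q" by blast
    moreover have "l' \<noteq> []" "length l' \<le> 4" using len by auto
    ultimately have "l' \<in> Rwords" unfolding Rwords_def by blast
    then show ?thesis using e len by simp
  qed
qed


lemma wlen_le: "geq v w \<Longrightarrow> wlen w \<le> length v"
  unfolding wlen_def by (rule Least_le) blast

lemma wlen_ex: "\<exists>v. geq v w \<and> length v = wlen w"
  unfolding wlen_def by (rule LeastI_ex) (blast intro: geq_refl)

lemma wlen_cong: "geq u w \<Longrightarrow> wlen u = wlen w"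
proof -
  assume h: "geq u w"
  have "\<And>v. geq v u \<longleftrightarrow> geq v w" using h geq_sym geq_trans by blast
  then show ?thesis unfolding wlen_def by simp
qed

lemma wlen_len: "wlen w \<le> length w" using wlen_le geq_refl by blast

lemma wlen_app: "wlen (u@v) \<le> wlen u + wlen v"
proof -
  obtain u' where u': "geq u' u" "length u' = wlen u" using wlen_ex by blast
  obtain v' where v': "geq v' v" "length v' = wlen v" using wlen_ex by blast
  have "geq ([]@u'@v') ([]@u@v')" using u'(1) by (rule geq_ctx)
  moreover have "geq (u@v'@[]) (u@v@[])" using v'(1) by (rule geq_ctx)
  ultimately have "geq (u'@v') (u@v)" using geq_trans by simp
  then show ?thesis using wlen_le u' v' by fastforce
qed

lemma irr_short: "length w < 2 \<Longrightarrow> irr w"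
proof -
  assume l: "length w < 2"
  have "\<And>v. \<not> rstep w v"
  proof
    fix v assume "rstep w v"
    then obtain p l r q where "w = p@l@q" "(l,r) \<in> set rules" by (cases rule: rstep.cases) auto
    moreover have "\<forall>(l,r)\<in>set rules. 2 \<le> length l" by (simp add: rules_def)
    ultimately show False using l by fastforce
  qed
  then show ?thesis unfolding irr_def by blast
qed

lemma wlen_letter: "wlen [a] = 1"
proof -
  have "wlen [a] \<le> 1" using wlen_len[of "[a]"] by simp
  moreover have "wlen [a] \<noteq> 0"
  proof
    assume "wlen [a] = 0"
    then obtain v where "geq v [a]" "length v = 0" using wlen_ex by metis
    then have "geq [] [a]" by simp
    moreover have "irr []" "irr [a]" using irr_short by simp_all
    ultimately have "[] = [a]" using geq_irr_eq by blast
    then show False by simp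
  qed
  ultimately show ?thesis by simp
qed

lemma geod_irr: assumes "geodesic v" "geq v y" "Rset y = {}" shows "irr v"
  unfolding irr_def
proof
  assume "\<exists>v'. rstep v v'"
  then obtain p l r q where v: "v = p@l@q" and R: "(l,r) \<in> set rules" by (auto elim: rstep.cases)
  have g: "geq (p@r@q) v" using geq_sym[OF geq_ctx[OF rule_valid[OF R]]] v by simp
  from rule_R4[OF R] show False
  proof
    assume "length r < length l"
    then have "wlen v < length v" using wlen_le[OF g] v by simp
    then show False using assms(1) unfolding geodesic_def by simp
  next
    assume "length l = 4 \<and> l \<in> Rwords"
    then have "l \<in> Rset y" unfolding Rset_def using assms(1,2) v by blast
    then show False using assms(3) by simp
  qed
qed


lemma geq_cancel': "geq (inv_letter a # a # u) u"
  using geq_cancel[of "[]" "inv_letter a" u] by (simp add: inv_inv_letter)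

lemma geq_cancel'': "geq (a # inv_letter a # u) u"
  using geq_cancel[of "[]" a u] by simp

theorem lemma6p1:
  fixes x y w :: word and a :: letter
  assumes "y \<in> cone_type x"
    and "\<not> geq y []"
    and "Rset y = {}"
    and "geq w y" and "geodesic w"
    and "[a] \<in> gens \<inter> cone_type x"
  shows "(x @ y) \<in> cone [] (x @ [a]) \<longleftrightarrow> hd w = a"
proof -
  have xy: "wlen (x@y) = wlen x + wlen y" using assms(1) unfolding cone_type_def by simp
  have xa: "wlen (x@[a]) = wlen x + 1" using assms(6) wlen_letter unfolding cone_type_def by simp
  have "inv_word (x@[a]) @ x @ y = [inv_letter a] @ (inv_word x @ x) @ y" by (simp add: inv_word_def)
  moreover have "geq ([inv_letter a] @ (inv_word x @ x) @ y) ([inv_letter a] @ [] @ y)"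
    using geq_inv_l by (rule geq_ctx)
  ultimately have wd: "wdist (x@[a]) (x@y) = wlen (inv_letter a # y)"
    unfolding wdist_def using wlen_cong by simp
  have cone_iff: "(x @ y) \<in> cone [] (x @ [a]) \<longleftrightarrow> wlen y = 1 + wlen (inv_letter a # y)"
    unfolding cone_def using wd xy xa by (simp add: wdist_def inv_word_def)
  have lower: "wlen y \<le> 1 + wlen (inv_letter a # y)"
  proof -
    have "wlen ([a] @ (inv_letter a # y)) = wlen y" using wlen_cong geq_cancel''[of a y] by simp
    then show ?thesis using wlen_app[of "[a]" "inv_letter a # y"] wlen_letter by simp
  qed
  have wne: "w \<noteq> []" using assms(2,4) geq_sym by blast
  have wlw: "wlen w = wlen y" using wlen_cong[OF assms(4)] .
  have lw: "length w = wlen y" using assms(5) wlw unfolding geodesic_def by simp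
  have irrw: "irr w" using geod_irr[OF assms(5,4,3)] .
  show ?thesis
  proof
    assume "(x @ y) \<in> cone [] (x @ [a])"
    then have e: "wlen y = 1 + wlen (inv_letter a # y)" using cone_iff by simp
    obtain v where v: "geq v (inv_letter a # y)" "length v = wlen (inv_letter a # y)" using wlen_ex by blast
    have "geq ([a] @ v @ []) ([a] @ (inv_letter a # y) @ [])" using v(1) by (rule geq_ctx)
    then have av: "geq (a # v) y" using geq_cancel''[of a y] geq_trans by simp
    have "geodesic (a#v)" unfolding geodesic_def using wlen_cong[OF av] v(2) e by simp
    then have "irr (a#v)" using geod_irr av assms(3) by blast
    moreover have "geq (a#v) w" using av assms(4) geq_sym geq_trans by blast
    ultimately have "a # v = w" using irrw geq_irr_eq by blast
    then show "hd w = a" by auto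
  next
    assume h: "hd w = a"
    then obtain w' where w: "w = a # w'" using wne by (cases w) auto
    have "geq ([inv_letter a] @ y @ []) ([inv_letter a] @ w @ [])" using geq_ctx[OF geq_sym[OF assms(4)]] .
    then have "geq (inv_letter a # y) w'" using geq_cancel'[of a w'] w geq_trans by simp
    then have "wlen (inv_letter a # y) \<le> length w'" using wlen_le geq_sym by blast
    then have "wlen (inv_letter a # y) + 1 \<le> wlen y" using lw w by simp
    then show "(x @ y) \<in> cone [] (x @ [a])" using cone_iff lower by simp
  qed
qed

end
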